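(* Let $n \geq 2$ and $r$ be positive integers. Let $u$ and $z$ be complex numbers with $w = z/u = e^{i\varphi}$ where $0 < \varphi < \pi$, and let $\sqrt{w} = e^{i\varphi/2}$. Then \[ \left|X_{n,r}^{*}(z,u)\right| \leq 4|u|^{r}\frac{\Gamma(1-1/n)\, r!}{\Gamma(r+1-1/n)}\left|1+\sqrt{w}\right|^{2r-2} \] and \[ \left|X_{n,r}^{*}(u,z)\right| \leq 4|z|^{r}\frac{\Gamma(1-1/n)\, r!}{\Gamma(r+1-1/n)}\left|1+\sqrt{w}\right|^{2r-2}. \]
   Context: $X_{n,r}(X) = {}_{2}F_{1}(-r,-r-1/n;1-1/n;X) = \sum_{s=0}^{r}\frac{(-r)_{s}(-r-1/n)_{s}}{(1-1/n)_{s}\,s!}X^{s}$ with $(y)_{s} = y(y+1)\cdots(y+s-1)$, and $X_{n,r}^{*}(X,Y) = Y^{r}X_{n,r}(X/Y)$. *)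

theory Defs
  imports "HOL-Analysis.Analysis"
begin

definition Xnr :: "nat \<Rightarrow> nat \<Rightarrow> complex \<Rightarrow> complex" where
  "Xnr n r X = (\<Sum>s\<le>r. (pochhammer (- of_nat r) s * pochhammer (- of_nat r - 1 / of_nat n) s)
      / (pochhammer (1 - 1 / of_nat n) s * of_nat (fact s)) * X ^ s)"

definition Xnr_star :: "nat \<Rightarrow> nat \<Rightarrow> complex \<Rightarrow> complex \<Rightarrow> complex" where
  "Xnr_star n r X Y = Y ^ r * Xnr n r (X / Y)"

end

theory Submission
  imports Defs
begin

lemma binom_sum_Suc:
  fixes g :: "nat \<Rightarrow> complex"
  shows "(\<Sum>k\<le>Suc n. of_nat (Suc n choose k) * g k) = (\<Sum>k\<le>n. of_nat (n choose k) * (g k + g (Suc k)))"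
proof -
  have A: "(\<Sum>k\<le>Suc n. of_nat (Suc n choose k) * g k) = g 0 + (\<Sum>k\<le>n. of_nat (Suc n choose Suc k) * g (Suc k))"
    by (subst sum.atMost_Suc_shift) simp
  have B: "(\<Sum>k\<le>n. of_nat (n choose k) * g k) = g 0 + (\<Sum>k\<le>n. of_nat (n choose Suc k) * g (Suc k))"
  proof -
    have "(\<Sum>k\<le>n. of_nat (n choose k) * g k) = (\<Sum>k\<le>Suc n. of_nat (n choose k) * g k)"
      by (simp only: sum.atMost_Suc) simp
    also have "\<dots> = g 0 + (\<Sum>k\<le>n. of_nat (n choose Suc k) * g (Suc k))"
      by (subst sum.atMost_Suc_shift) simp
    finally show ?thesis .
  qed
  have "(\<Sum>k\<le>n. of_nat (n choose k) * (g k + g (Suc k)))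
     = (\<Sum>k\<le>n. of_nat (n choose k) * g k) + (\<Sum>k\<le>n. of_nat (n choose k) * g (Suc k))"
    by (simp add: distrib_left sum.distrib)
  also have "\<dots> = g 0 + ((\<Sum>k\<le>n. of_nat (n choose Suc k) * g (Suc k)) + (\<Sum>k\<le>n. of_nat (n choose k) * g (Suc k)))"
    unfolding B by simp
  also have "\<dots> = g 0 + (\<Sum>k\<le>n. of_nat (Suc n choose Suc k) * g (Suc k))"
    by (simp add: sum.distrib[symmetric] distrib_right add.commute)
  finally show ?thesis unfolding A by simp
qed

lemma pf:
  fixes x :: complex
  assumes "\<forall>j::nat. x + of_nat j \<noteq> 0"
  shows "(\<Sum>j\<le>r. of_nat (r choose j) * ((-1)^j / (x + of_nat j))) = fact r / pochhammer x (Suc r)"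
  using assms
proof (induction r arbitrary: x)
  case 0
  then show ?case by (simp add: pochhammer_Suc)
next
  case (Suc r)
  have x1: "\<forall>j::nat. (x + 1) + of_nat j \<noteq> 0"
    using Suc.prems by (metis add.assoc of_nat_Suc add.commute)
  have "(\<Sum>j\<le>Suc r. of_nat (Suc r choose j) * ((-1)^j / (x + of_nat j)))
      = (\<Sum>j\<le>r. of_nat (r choose j) * ((-1)^j / (x + of_nat j))) - (\<Sum>j\<le>r. of_nat (r choose j) * ((-1)^j / ((x+1) + of_nat j)))"
    unfolding binom_sum_Suc by (simp add: sum_subtractf[symmetric] algebra_simps diff_divide_distrib add_divide_distrib)
  also have "\<dots> = fact r / pochhammer x (Suc r) - fact r / pochhammer (x+1) (Suc r)"
    using Suc.IH[OF Suc.prems] Suc.IH[OF x1] by simp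
  also have "\<dots> = fact (Suc r) / pochhammer x (Suc (Suc r))"
  proof -
    have p1: "pochhammer x (Suc (Suc r)) = pochhammer x (Suc r) * (x + of_nat (Suc r))"
      by (simp add: pochhammer_Suc)
    have p2: "pochhammer x (Suc (Suc r)) = x * pochhammer (x+1) (Suc r)"
      by (simp add: pochhammer_rec)
    have nz: "pochhammer x (Suc (Suc r)) \<noteq> 0"
      using Suc.prems by (auto simp: pochhammer_eq_0_iff)
    have n1: "pochhammer x (Suc r) \<noteq> 0" "pochhammer (x+1) (Suc r) \<noteq> 0" "x \<noteq> 0" "x + of_nat (Suc r) \<noteq> 0"
      using nz p1 p2 by auto
    have Q: "pochhammer (x+1) (Suc r) = pochhammer x (Suc r) * (x + of_nat (Suc r)) / x"
      using p1 p2 n1 by (simp add: field_simps)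
    have alg: "\<And>P y (f::complex). P \<noteq> 0 \<Longrightarrow> y \<noteq> 0 \<Longrightarrow> x \<noteq> 0 \<Longrightarrow> f/P - f/(P*y/x) = f*(y-x)/(P*y)"
      by (simp add: field_simps)
    have "fact (Suc r) = fact r * ((x + of_nat (Suc r)) - x)" by simp
    then show ?thesis unfolding Q p1 using n1 alg by simp
  qed
  finally show ?case .
qed

lemma poch_id:
  fixes a :: complex
  shows "pochhammer (a - of_nat s) (Suc r) * pochhammer (- of_nat r - a) s = pochhammer a (Suc r) * pochhammer (1 - a) s"
proof (induction s)
  case 0
  then show ?case by simp
next
  case (Suc s)
  have e1: "pochhammer (a - of_nat (Suc s)) (Suc r) = (a - of_nat (Suc s)) * pochhammer (a - of_nat s) r"
    by (simp add: pochhammer_rec algebra_simps)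
  have e2: "pochhammer (a - of_nat s) (Suc r) = pochhammer (a - of_nat s) r * (a - of_nat s + of_nat r)"
    by (simp add: pochhammer_Suc)
  have "pochhammer (a - of_nat (Suc s)) (Suc r) * pochhammer (- of_nat r - a) (Suc s)
     = (a - of_nat (Suc s)) * pochhammer (a - of_nat s) r * (pochhammer (- of_nat r - a) s * (- of_nat r - a + of_nat s))"
    unfolding e1 pochhammer_Suc[of "- of_nat r - a" s] by (rule refl)
  also have "\<dots> = (of_nat (Suc s) - a) * (pochhammer (a - of_nat s) (Suc r) * pochhammer (- of_nat r - a) s)"
    unfolding e2 by (simp add: algebra_simps)
  also have "\<dots> = pochhammer a (Suc r) * pochhammer (1 - a) (Suc s)"
    unfolding Suc.IH pochhammer_Suc[of "1 - a" s] by (simp add: algebra_simps)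
  finally show ?case .
qed

lemma poch_neg_nat:
  "pochhammer (- of_nat r :: complex) s / fact s = (-1)^s * of_nat (r choose s)"
proof -
  have e: "(of_nat r gchoose s :: complex) = (- 1) ^ s * pochhammer (- of_nat r) s / fact s"
    by (rule gbinomial_pochhammer)
  have m1: "((-1::complex)^s * (-1)^s) = 1" by (simp add: power_mult_distrib[symmetric])
  have "pochhammer (- of_nat r :: complex) s / fact s = ((-1)^s * (-1)^s) * (pochhammer (- of_nat r) s / fact s)"
    by (simp only: m1 mult_1)
  also have "\<dots> = (-1)^s * ((-1) ^ s * pochhammer (- of_nat r) s / fact s)"
    by (simp only: mult.assoc times_divide_eq_right)
  also have "\<dots> = (-1)^s * (of_nat r gchoose s)" by (simp only: e)
  also have "\<dots> = (-1)^s * of_nat (r choose s)" by (simp only: binomial_gbinomial)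
  finally show ?thesis .
qed

lemma nonint:
  fixes \<alpha> :: real and s j :: nat
  assumes "0 < \<alpha>" "\<alpha> < 1"
  shows "complex_of_real \<alpha> - of_nat s + of_nat j \<noteq> 0"
proof
  assume h: "complex_of_real \<alpha> - of_nat s + of_nat j = 0"
  have "complex_of_real (\<alpha> - real s + real j) = complex_of_real \<alpha> - of_nat s + of_nat j" by simp
  then have "complex_of_real (\<alpha> - real s + real j) = 0" using h by simp
  then have "\<alpha> - real s + real j = 0" by (simp only: of_real_eq_0_iff)
  then have "\<alpha> = real s - real j" by simp
  then have "\<alpha> = real_of_int (int s - int j)" by simp
  then have "0 < real_of_int (int s - int j)" "real_of_int (int s - int j) < 1" using assms by auto
  then have "0 < int s - int j" "int s - int j < 1" by (simp_all only: of_int_0_less_iff of_int_less_1_iff)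
  then show False by arith
qed

lemma coeff_formula:
  fixes \<alpha> :: real and s r :: nat
  assumes "0 < \<alpha>" "\<alpha> < 1"
  defines "a \<equiv> complex_of_real \<alpha>"
  shows "pochhammer (- of_nat r) s * pochhammer (- of_nat r - a) s / (pochhammer (1 - a) s * of_nat (fact s))
     = (-1)^s * of_nat (r choose s) * (pochhammer a (Suc r) / fact r) *
        (\<Sum>j\<le>r. of_nat (r choose j) * ((-1)^j / ((a - of_nat s) + of_nat j)))"
proof -
  have nz: "\<forall>j::nat. (a - of_nat s) + of_nat j \<noteq> 0"
    using nonint[OF assms(1,2)] unfolding a_def by blast
  have p1: "pochhammer (a - of_nat s) (Suc r) \<noteq> 0"
    using nz by (auto simp: pochhammer_eq_0_iff)
  have p2: "pochhammer (1 - a) s \<noteq> 0"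
  proof -
    have "\<forall>k::nat. 1 - a + of_nat k \<noteq> 0"
    proof
      fix k :: nat
      have "1 - a + of_nat k = - (a - of_nat (Suc k) + of_nat 0)" by simp
      moreover have "a - of_nat (Suc k) + of_nat 0 \<noteq> 0"
        using nonint[OF assms(1,2), of "Suc k" 0] unfolding a_def .
      ultimately show "1 - a + of_nat k \<noteq> 0" by (metis neg_equal_0_iff_equal)
    qed
    then show ?thesis by (auto simp: pochhammer_eq_0_iff)
  qed
  have "pochhammer (- of_nat r - a) s / pochhammer (1 - a) s = pochhammer a (Suc r) / pochhammer (a - of_nat s) (Suc r)"
    using poch_id[of a s r] p1 p2 by (simp add: field_simps)
  also have "\<dots> = (pochhammer a (Suc r) / fact r) * (\<Sum>j\<le>r. of_nat (r choose j) * ((-1)^j / ((a - of_nat s) + of_nat j)))"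
    using pf[OF nz, of r] p1 by simp
  finally have q: "pochhammer (- of_nat r - a) s / pochhammer (1 - a) s = \<dots>" .
  have "pochhammer (- of_nat r) s * pochhammer (- of_nat r - a) s / (pochhammer (1 - a) s * of_nat (fact s))
      = (pochhammer (- of_nat r :: complex) s / fact s) * (pochhammer (- of_nat r - a) s / pochhammer (1 - a) s)"
    by simp
  also have "\<dots> = (-1)^s * of_nat (r choose s) * (pochhammer a (Suc r) / fact r) *
        (\<Sum>j\<le>r. of_nat (r choose j) * ((-1)^j / ((a - of_nat s) + of_nat j)))" unfolding q poch_neg_nat by simp
  finally show ?thesis .
qed


lemma exp_int:
  fixes c :: real assumes "c \<noteq> 0"
  shows "((\<lambda>t::real. exp (\<i> * of_real (c * t))) has_integral complex_of_real (2 * sin (c * pi) / c)) {-pi..pi}"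
proof -
  let ?f = "\<lambda>x::complex. exp (\<i> * of_real c * x) / (\<i> * of_real c)"
  have d: "((?f \<circ> of_real) has_vector_derivative exp (\<i> * of_real (c * t))) (at t within {-pi..pi})" for t
  proof (rule has_complex_derivative_imp_has_vector_derivative)
    show "(?f has_field_derivative exp (\<i> * of_real (c * t))) (at (of_real t) within cbox (of_real (-pi)) (of_real pi))"
      using assms by (auto intro!: derivative_eq_intros simp: field_simps)
  qed
  have "((\<lambda>t::real. exp (\<i> * of_real (c * t))) has_integral ((?f \<circ> of_real) pi - (?f \<circ> of_real) (-pi))) {-pi..pi}"
    using fundamental_theorem_of_calculus[of "-pi" pi "?f \<circ> of_real"] d by simp
  moreover have "(?f \<circ> of_real) pi - (?f \<circ> of_real) (-pi) = complex_of_real (2 * sin (c * pi) / c)"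
  proof -
    have "(?f \<circ> of_real) pi - (?f \<circ> of_real) (-pi) = (exp (\<i> * of_real (c*pi)) - exp (-(\<i> * of_real (c*pi)))) / (\<i> * of_real c)"
      by (simp add: diff_divide_distrib mult.assoc)
    also have "\<dots> = 2 * sin (of_real (c*pi)) / of_real c"
      using assms by (simp add: sin_exp_eq field_simps)
    finally show ?thesis by (simp add: sin_of_real flip: of_real_mult) (simp add: field_simps)
  qed
  ultimately show ?thesis by simp
qed

lemma exp_split:
  fixes \<alpha> \<theta> :: real and s j :: nat
  shows "exp (\<i> * of_real ((\<alpha> - real s + real j) * \<theta>)) = exp (\<i> * of_real (\<alpha> * \<theta>)) * exp (\<i> * of_real \<theta>) ^ j * exp (- (\<i> * of_real \<theta>)) ^ s"
proof -
  have "\<i> * of_real ((\<alpha> - real s + real j) * \<theta>) = \<i> * of_real (\<alpha> * \<theta>) + of_nat j * (\<i> * of_real \<theta>) + of_nat s * (- (\<i> * of_real \<theta>))"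
    by (simp add: algebra_simps)
  then show ?thesis by (simp only: exp_add exp_of_nat_mult)
qed

lemma sin_shift:
  fixes \<alpha> :: real and s j :: nat
  shows "sin ((\<alpha> - real s + real j) * pi) = (-1)^(s+j) * sin (\<alpha> * pi)"
proof -
  have "(\<alpha> - real s + real j) * pi = \<alpha> * pi + (real j * pi - real s * pi)" by (simp add: algebra_simps)
  then show ?thesis by (simp add: sin_add sin_diff cos_diff sin_npi cos_npi power_add)
qed


definition Fint :: "real \<Rightarrow> nat \<Rightarrow> complex \<Rightarrow> real \<Rightarrow> complex" where
  "Fint \<alpha> r w \<theta> = (\<Sum>s\<le>r. \<Sum>j\<le>r. of_nat (r choose s) * of_nat (r choose j) * w ^ s
       * exp (\<i> * of_real ((\<alpha> - real s + real j) * \<theta>)))"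

lemma nonint_real:
  fixes \<alpha> :: real and s j :: nat
  assumes "0 < \<alpha>" "\<alpha> < 1"
  shows "\<alpha> - real s + real j \<noteq> 0"
  using nonint[OF assms, of s j] by (metis of_real_0 of_real_add of_real_diff of_real_of_nat_eq)

lemma Fint_has_integral:
  fixes \<alpha> :: real
  assumes "0 < \<alpha>" "\<alpha> < 1"
  shows "(Fint \<alpha> r w has_integral (\<Sum>s\<le>r. \<Sum>j\<le>r. of_nat (r choose s) * of_nat (r choose j) * w ^ s
       * complex_of_real (2 * sin ((\<alpha> - real s + real j) * pi) / (\<alpha> - real s + real j)))) {-pi..pi}"
  unfolding Fint_def[abs_def]
  by (intro has_integral_sum finite_atMost has_integral_mult_right exp_int nonint_real assms)

lemma sum_eval:
  fixes \<alpha> :: real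
  assumes "0 < \<alpha>" "\<alpha> < 1"
  shows "(\<Sum>s\<le>r. \<Sum>j\<le>r. of_nat (r choose s) * of_nat (r choose j) * w ^ s
       * complex_of_real (2 * sin ((\<alpha> - real s + real j) * pi) / (\<alpha> - real s + real j)))
    = complex_of_real (2 * sin (\<alpha> * pi)) * (\<Sum>s\<le>r. \<Sum>j\<le>r. of_nat (r choose s) * of_nat (r choose j) * w ^ s
       * ((-1)^(s+j) / (complex_of_real \<alpha> - of_nat s + of_nat j)))"
  unfolding sum_distrib_left
proof (intro sum.cong refl)
  fix s j assume "s \<in> {..r}" "j \<in> {..r}"
  have "complex_of_real (2 * sin ((\<alpha> - real s + real j) * pi) / (\<alpha> - real s + real j))
     = complex_of_real (2 * sin (\<alpha> * pi)) * ((-1)^(s+j) / (complex_of_real \<alpha> - of_nat s + of_nat j))"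
    unfolding sin_shift by simp
  note eq = this
  show "of_nat (r choose s) * of_nat (r choose j) * w ^ s
       * complex_of_real (2 * sin ((\<alpha> - real s + real j) * pi) / (\<alpha> - real s + real j)) =
       complex_of_real (2 * sin (\<alpha> * pi)) * (of_nat (r choose s) * of_nat (r choose j) * w ^ s
       * ((-1)^(s+j) / (complex_of_real \<alpha> - of_nat s + of_nat j)))"
    unfolding eq by (simp only: mult_ac)
qed

lemma X_expand:
  fixes \<alpha> :: real
  assumes "0 < \<alpha>" "\<alpha> < 1"
  defines "a \<equiv> complex_of_real \<alpha>"
  shows "(\<Sum>s\<le>r. (pochhammer (- of_nat r) s * pochhammer (- of_nat r - a) s) / (pochhammer (1 - a) s * of_nat (fact s)) * w ^ s)
    = (pochhammer a (Suc r) / fact r) * (\<Sum>s\<le>r. \<Sum>j\<le>r. of_nat (r choose s) * of_nat (r choose j) * w ^ s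
       * ((-1)^(s+j) / (a - of_nat s + of_nat j)))"
  unfolding sum_distrib_left
proof (intro sum.cong refl)
  fix s assume "s \<in> {..r}"
  have "(pochhammer (- of_nat r) s * pochhammer (- of_nat r - a) s) / (pochhammer (1 - a) s * of_nat (fact s)) * w ^ s
     = (-1)^s * of_nat (r choose s) * (pochhammer a (Suc r) / fact r) *
        (\<Sum>j\<le>r. of_nat (r choose j) * ((-1)^j / ((a - of_nat s) + of_nat j))) * w ^ s"
    using coeff_formula[OF assms(1,2), of r s] unfolding a_def by simp
  also have "\<dots> = (\<Sum>j\<le>r. pochhammer a (Suc r) / fact r * (of_nat (r choose s) * of_nat (r choose j) * w ^ s *
              ((-1)^(s+j) / (a - of_nat s + of_nat j))))"
    unfolding sum_distrib_left sum_distrib_right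
    by (intro sum.cong refl) (simp add: power_add algebra_simps)
  finally show "(pochhammer (- of_nat r) s * pochhammer (- of_nat r - a) s) / (pochhammer (1 - a) s * of_nat (fact s)) * w ^ s = \<dots>" .
qed


lemma Fint_prod:
  "Fint \<alpha> r w \<theta> = exp (\<i> * of_real (\<alpha> * \<theta>)) *
     ((1 + exp (\<i> * of_real \<theta>)) * (1 + w * exp (- (\<i> * of_real \<theta>)))) ^ r"
proof -
  let ?e = "exp (\<i> * of_real \<theta>)" and ?e' = "exp (- (\<i> * of_real \<theta>))"
  have b1: "(1 + ?e) ^ r = (\<Sum>j\<le>r. of_nat (r choose j) * ?e ^ j)"
    using binomial_ring[of ?e 1 r] by (simp add: add.commute)
  have b2: "(1 + w * ?e') ^ r = (\<Sum>s\<le>r. of_nat (r choose s) * (w * ?e') ^ s)"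
    using binomial_ring[of "w * ?e'" 1 r] by (simp add: add.commute)
  show ?thesis
    unfolding Fint_def power_mult_distrib b1 b2 exp_split sum_distrib_left sum_distrib_right
    by (intro sum.cong refl, simp add: power_mult_distrib mult_ac)
qed


definition Zf :: "complex \<Rightarrow> real \<Rightarrow> complex" where
  "Zf w \<theta> = (1 + exp (\<i> * of_real \<theta>)) * (1 + w * exp (- (\<i> * of_real \<theta>)))"

lemma Zsq:
  assumes "cmod w = 1"
  shows "Zf w \<theta> * cnj (Zf w \<theta>) = (of_real (cmod (1+w)^2) + 2) + (2+2*w) * exp (\<i> * of_real ((-1) * \<theta>))
     + (2 + 2 * cnj w) * exp (\<i> * of_real (1 * \<theta>)) + cnj w * exp (\<i> * of_real (2 * \<theta>))
     + w * exp (\<i> * of_real ((-2) * \<theta>))"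
proof -
  define E where "E = exp (\<i> * of_real \<theta>)"
  have E0: "E \<noteq> 0" unfolding E_def by simp
  have w0: "w \<noteq> 0" using assms by auto
  have cw: "cnj w = 1 / w"
  proof -
    have "w * cnj w = 1" using complex_norm_square[of w] assms by simp
    then show ?thesis using w0 by (simp add: field_simps)
  qed
  have em: "exp (- (\<i> * of_real \<theta>)) = 1 / E" unfolding E_def by (simp add: exp_minus field_simps)
  have cE: "cnj E = 1 / E" unfolding E_def by (simp add: exp_cnj exp_minus field_simps)
  have e1: "exp (\<i> * of_real ((-1) * \<theta>)) = 1 / E" using em by simp
  have e2: "exp (\<i> * of_real (1 * \<theta>)) = E" unfolding E_def by simp
  have e3: "exp (\<i> * of_real (2 * \<theta>)) = E^2"
    unfolding E_def by (simp add: exp_of_nat_mult[symmetric] algebra_simps)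
  have e4: "exp (\<i> * of_real ((-2) * \<theta>)) = 1 / E^2"
    using e3 by (simp add: exp_minus[symmetric] field_simps)
      (metis exp_minus inverse_eq_divide mult_minus_left mult_minus_right of_real_minus)
  have n1: "of_real (cmod (1+w)^2) = (1 + w) * (1 + cnj w)"
    using complex_norm_square[of "1+w"] by simp
  show ?thesis
    unfolding Zf_def e1 e2 e3 e4 n1 em[folded E_def] E_def[symmetric] complex_cnj_mult complex_cnj_add
      complex_cnj_one complex_cnj_divide cE cw
    using E0 w0 by (simp add: field_simps) (simp add: algebra_simps power2_eq_square power4_eq_xxxx)
qed


lemma exp_int_int:
  fixes k :: int assumes "k \<noteq> 0"
  shows "((\<lambda>t::real. exp (\<i> * of_real (of_int k * t))) has_integral 0) {-pi..pi}"
proof -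
  have "sin (of_int k * pi) = 0" using sin_zero_iff_int2 by blast
  then show ?thesis using exp_int[of "of_int k"] assms by simp
qed

lemma Zsq_integral:
  assumes "cmod w = 1"
  shows "((\<lambda>\<theta>. cmod (Zf w \<theta>) ^ 2) has_integral (2 * pi * (cmod (1+w)^2 + 2))) {-pi..pi}"
proof -
  let ?G = "\<lambda>\<theta>. (of_real (cmod (1+w)^2) + 2) + (2+2*w) * exp (\<i> * of_real ((-1) * \<theta>))
     + (2 + 2 * cnj w) * exp (\<i> * of_real (1 * \<theta>)) + cnj w * exp (\<i> * of_real (2 * \<theta>))
     + w * exp (\<i> * of_real ((-2) * \<theta>))"
  have i1: "((\<lambda>t::real. exp (\<i> * of_real ((-1) * t))) has_integral 0) {-pi..pi}"
    using exp_int_int[of "-1"] by simp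
  have i2: "((\<lambda>t::real. exp (\<i> * of_real (1 * t))) has_integral 0) {-pi..pi}"
    using exp_int_int[of "1"] by simp
  have i3: "((\<lambda>t::real. exp (\<i> * of_real (2 * t))) has_integral 0) {-pi..pi}"
    using exp_int_int[of "2"] by simp
  have i4: "((\<lambda>t::real. exp (\<i> * of_real ((-2) * t))) has_integral 0) {-pi..pi}"
    using exp_int_int[of "-2"] by simp
  have i0: "((\<lambda>t::real. (of_real (cmod (1+w)^2) + 2 :: complex)) has_integral (Henstock_Kurzweil_Integration.content {-pi..pi} *\<^sub>R (of_real (cmod (1+w)^2) + 2))) {-pi..pi}"
    by (rule has_integral_const_real)
  have "(?G has_integral (Henstock_Kurzweil_Integration.content {-pi..pi} *\<^sub>R (of_real (cmod (1+w)^2) + 2) + (2+2*w) * 0 + (2 + 2 * cnj w) * 0 + cnj w * 0 + w * 0)) {-pi..pi}"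
    by (intro has_integral_add i0 has_integral_mult_right i1 i2 i3 i4)
  then have "(?G has_integral of_real (2 * pi * (cmod (1+w)^2 + 2))) {-pi..pi}"
    by (simp add: scaleR_conv_of_real)
  moreover have "?G \<theta> = of_real (cmod (Zf w \<theta>) ^ 2)" for \<theta>
    using Zsq[OF assms, of \<theta>] complex_norm_square[of "Zf w \<theta>"] by simp
  ultimately have "((\<lambda>\<theta>. complex_of_real (cmod (Zf w \<theta>) ^ 2)) has_integral of_real (2 * pi * (cmod (1+w)^2 + 2))) {-pi..pi}"
    by simp
  from has_integral_linear[OF this bounded_linear_Re] show ?thesis by (simp add: o_def)
qed


lemma Zf_bound:
  assumes "cmod w = 1"
  shows "cmod (Zf w \<theta>) \<le> cmod (1 + w) + 2"
proof -
  have "Zf w \<theta> = (1 + w) + exp (\<i> * of_real \<theta>) + w * exp (- (\<i> * of_real \<theta>))"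
    unfolding Zf_def by (simp add: algebra_simps exp_minus field_simps)
  also have "cmod \<dots> \<le> cmod (1 + w) + cmod (exp (\<i> * of_real \<theta>)) + cmod (w * exp (- (\<i> * of_real \<theta>)))"
    by (meson norm_triangle_ineq order_trans add_mono order_refl)
  also have "\<dots> = cmod (1 + w) + 2"
    using assms by (simp add: norm_mult)
  finally show ?thesis .
qed

lemma core_bound:
  fixes \<alpha> :: real and w :: complex
  assumes "0 < \<alpha>" "\<alpha> < 1" "cmod w = 1" "r \<ge> 2" "sin (\<alpha> * pi) > 0"
  defines "a \<equiv> complex_of_real \<alpha>"
  shows "cmod (\<Sum>s\<le>r. (pochhammer (- of_nat r) s * pochhammer (- of_nat r - a) s) / (pochhammer (1 - a) s * of_nat (fact s)) * w ^ s)
     \<le> pochhammer \<alpha> (Suc r) * pi * (cmod (1 + w) + 2) ^ (r - 2) * (cmod (1+w)^2 + 2) / (fact r * sin (\<alpha> * pi))"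
proof -
  define S where "S = (\<Sum>s\<le>r. \<Sum>j\<le>r. of_nat (r choose s) * of_nat (r choose j) * w ^ s
       * ((-1)^(s+j) / (a - of_nat s + of_nat j)))"
  define B where "B = cmod (1 + w) + 2"
  have X: "(\<Sum>s\<le>r. (pochhammer (- of_nat r) s * pochhammer (- of_nat r - a) s) / (pochhammer (1 - a) s * of_nat (fact s)) * w ^ s)
     = (pochhammer a (Suc r) / fact r) * S"
    unfolding S_def a_def by (rule X_expand[OF assms(1,2)])
  have hF: "(Fint \<alpha> r w has_integral (complex_of_real (2 * sin (\<alpha> * pi)) * S)) {-pi..pi}"
    using Fint_has_integral[OF assms(1,2), of r w] unfolding sum_eval[OF assms(1,2)] S_def a_def .
  have hh: "((\<lambda>\<theta>. B ^ (r - 2) * cmod (Zf w \<theta>) ^ 2) has_integral (B ^ (r - 2) * (2 * pi * (cmod (1+w)^2 + 2)))) {-pi..pi}"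
    by (intro has_integral_mult_right Zsq_integral assms(3))
  have pw: "norm (Fint \<alpha> r w \<theta>) \<le> B ^ (r - 2) * cmod (Zf w \<theta>) ^ 2" for \<theta>
  proof -
    have "norm (Fint \<alpha> r w \<theta>) = cmod (Zf w \<theta>) ^ r"
      unfolding Fint_prod Zf_def[symmetric] by (simp add: norm_mult norm_power)
    also have "\<dots> = cmod (Zf w \<theta>) ^ (r - 2) * cmod (Zf w \<theta>) ^ 2"
      using assms(4) by (metis le_add_diff_inverse2 power_add)
    also have "\<dots> \<le> B ^ (r - 2) * cmod (Zf w \<theta>) ^ 2"
      using Zf_bound[OF assms(3), of \<theta>] unfolding B_def
      by (intro mult_right_mono power_mono) auto
    finally show ?thesis .
  qed
  have "norm (integral {-pi..pi} (Fint \<alpha> r w)) \<le> integral {-pi..pi} (\<lambda>\<theta>. B ^ (r - 2) * cmod (Zf w \<theta>) ^ 2)"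
    using hF hh pw by (intro integral_norm_bound_integral) auto
  then have "norm (complex_of_real (2 * sin (\<alpha> * pi)) * S) \<le> B ^ (r - 2) * (2 * pi * (cmod (1+w)^2 + 2))"
    unfolding integral_unique[OF hF] integral_unique[OF hh] .
  then have Sb: "2 * sin (\<alpha> * pi) * cmod S \<le> B ^ (r - 2) * (2 * pi * (cmod (1+w)^2 + 2))"
    using assms(5) by (simp add: norm_mult)
  have pa: "pochhammer a (Suc r) = complex_of_real (pochhammer \<alpha> (Suc r))"
    unfolding a_def by (simp add: pochhammer_of_real)
  have ppos: "pochhammer \<alpha> (Suc r) > 0" using assms(1) by (intro pochhammer_pos)
  have "cmod ((pochhammer a (Suc r) / fact r) * S) = pochhammer \<alpha> (Suc r) / fact r * cmod S"
    unfolding pa using ppos by (simp add: norm_mult norm_divide)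
  also have "\<dots> \<le> pochhammer \<alpha> (Suc r) / fact r * (B ^ (r - 2) * (2 * pi * (cmod (1+w)^2 + 2)) / (2 * sin (\<alpha> * pi)))"
    using Sb assms(5) ppos by (intro mult_left_mono) (auto simp: field_simps)
  also have "\<dots> = pochhammer \<alpha> (Suc r) * pi * B ^ (r - 2) * (cmod (1+w)^2 + 2) / (fact r * sin (\<alpha> * pi))"
    using assms(5) by (simp add: field_simps)
  finally show ?thesis unfolding X B_def .
qed


lemma sin_lower:
  fixes x :: real assumes "0 \<le> x" "x \<le> pi / 2"
  shows "3 / 8 * x \<le> sin x"
proof -
  have m: "\<bar>sin x - (\<Sum>m<3. sin_coeff m * x ^ m)\<bar> \<le> inverse (fact 3) * \<bar>x\<bar> ^ 3"
    by (rule Maclaurin_sin_bound)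
  have "(\<Sum>m<3. sin_coeff m * x ^ m) = x"
    by (simp add: numeral_3_eq_3 sin_coeff_def)
  then have "x - x ^ 3 / 6 \<le> sin x" using m assms(1) by (simp add: fact_numeral abs_if split: if_splits) 
  moreover have "x ^ 3 / 6 \<le> 5 / 8 * x"
  proof -
    have "x ^ 2 \<le> (pi / 2) ^ 2" using assms by (intro power_mono) auto
    also have "\<dots> \<le> (16 / 10) ^ 2" using pi_less_4 pi_gt3 pi_approx
      by (intro power_mono) auto
    finally have "x ^ 2 \<le> (16/10)^2" .
    then have "x ^ 2 \<le> 256 / 100" by (simp add: power2_eq_square)
    then have "x * x ^ 2 \<le> x * (256 / 100)" using assms(1) by (intro mult_left_mono) auto
    then show ?thesis using assms(1) by (simp add: power3_eq_cube power2_eq_square)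
  qed
  ultimately show ?thesis by simp
qed

lemma poch_prod_le:
  fixes \<alpha> :: real assumes "0 \<le> \<alpha>" "\<alpha> < 1"
  shows "pochhammer (\<alpha> + 1) r * pochhammer (1 - \<alpha>) r \<le> (fact r) ^ 2"
proof (induction r)
  case 0
  then show ?case by simp
next
  case (Suc r)
  have "pochhammer (\<alpha> + 1) (Suc r) * pochhammer (1 - \<alpha>) (Suc r)
      = (pochhammer (\<alpha> + 1) r * pochhammer (1 - \<alpha>) r) * ((\<alpha> + 1 + r) * (1 - \<alpha> + r))"
    by (simp add: pochhammer_Suc)
  also have "\<dots> \<le> (fact r) ^ 2 * (real (Suc r)) ^ 2"
  proof (rule mult_mono[OF Suc.IH])
    show "(\<alpha> + 1 + real r) * (1 - \<alpha> + real r) \<le> real (Suc r) ^ 2"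
    proof -
      have "(\<alpha> + 1 + real r) * (1 - \<alpha> + real r) = (1 + real r) ^ 2 - \<alpha> ^ 2"
        by (simp add: algebra_simps power2_eq_square)
      then show ?thesis by simp
    qed
    show "0 \<le> (fact r :: real) ^ 2" by simp
    show "0 \<le> (\<alpha> + 1 + real r) * (1 - \<alpha> + real r)" using assms by auto
  qed
  also have "\<dots> = (fact (Suc r)) ^ 2" by (simp add: power_mult_distrib[symmetric] algebra_simps)
  finally show ?case .
qed

lemma rho_ineq:
  fixes \<rho> :: real assumes "0 \<le> \<rho>" "\<rho> \<le> 2"
  shows "\<rho> ^ 2 + 2 \<le> 3 / 2 * (\<rho> + 2)"
proof -
  have "(\<rho> - 2) * (\<rho> + 1/2) \<le> 0" using assms by (intro mult_nonpos_nonneg) auto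
  moreover have "\<rho> ^ 2 + 2 - 3 / 2 * (\<rho> + 2) = (\<rho> - 2) * (\<rho> + 1/2)"
    by (simp add: field_simps power2_eq_square)
  ultimately show ?thesis by linarith
qed


lemma main_bound:
  fixes n r :: nat and w :: complex
  assumes "n \<ge> 2" "r \<ge> 1" "cmod w = 1"
  shows "cmod (Xnr n r w) \<le> 4 * (fact r / pochhammer (1 - 1 / real n) r) * (cmod (1 + w) + 2) ^ (r - 1)"
proof -
  define \<alpha> where "\<alpha> = 1 / real n"
  define a where "a = complex_of_real \<alpha>"
  define \<rho> where "\<rho> = cmod (1 + w)"
  define B where "B = \<rho> + 2"
  define Q where "Q = pochhammer (1 - \<alpha>) r"
  have a0: "0 < \<alpha>" using assms(1) unfolding \<alpha>_def by simp
  have ah: "\<alpha> \<le> 1/2" using assms(1) unfolding \<alpha>_def by (simp add: field_simps)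
  have a1: "\<alpha> < 1" using ah by simp
  have an: "1 / of_nat n = a" unfolding a_def \<alpha>_def by simp
  have Xeq: "Xnr n r w = (\<Sum>s\<le>r. (pochhammer (- of_nat r) s * pochhammer (- of_nat r - a) s) / (pochhammer (1 - a) s * of_nat (fact s)) * w ^ s)"
    unfolding Xnr_def an ..
  have \<rho>0: "0 \<le> \<rho>" unfolding \<rho>_def by simp
  have \<rho>2: "\<rho> \<le> 2" unfolding \<rho>_def using norm_triangle_ineq[of 1 w] assms(3) by simp
  have Qpos: "Q > 0" unfolding Q_def using a1 by (intro pochhammer_pos) simp
  have B0: "B > 0" unfolding B_def using \<rho>0 by simp
  have goal_form: "fact r / pochhammer (1 - 1 / real n) r = fact r / Q" unfolding Q_def \<alpha>_def ..
  show ?thesis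
  proof (cases "r = 1")
    case True
    have "Xnr n r w = 1 + (1 + a) / (1 - a) * w"
      unfolding Xeq using True by (simp add: pochhammer_Suc algebra_simps)
    also have "cmod \<dots> \<le> 1 + cmod ((1 + a) / (1 - a) * w)" by (rule norm_triangle_le) simp
    also have "cmod ((1 + a) / (1 - a) * w) = (1 + \<alpha>) / (1 - \<alpha>)"
    proof -
      have e: "(1 + a) / (1 - a) = complex_of_real ((1 + \<alpha>) / (1 - \<alpha>))" unfolding a_def by simp
      show ?thesis by (simp only: norm_mult e norm_of_real assms(3)) (use a0 a1 in simp)
    qed
    also have "1 + (1 + \<alpha>) / (1 - \<alpha>) \<le> 4 * (fact r / Q) * B ^ (r - 1)"
      unfolding True Q_def using a0 a1 by (simp add: field_simps)
    finally show ?thesis unfolding goal_form B_def \<rho>_def .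
  next
    case False
    then have r2: "r \<ge> 2" using assms(2) by simp
    have sl: "3 / 8 * (\<alpha> * pi) \<le> sin (\<alpha> * pi)"
      using a0 ah by (intro sin_lower) (auto simp: field_simps)
    have "0 < \<alpha> * pi" using a0 by simp
    then have spos: "sin (\<alpha> * pi) > 0" using sl by linarith
    have cb: "cmod (Xnr n r w) \<le> pochhammer \<alpha> (Suc r) * pi * B ^ (r - 2) * (\<rho>^2 + 2) / (fact r * sin (\<alpha> * pi))"
      unfolding Xeq a_def B_def \<rho>_def by (rule core_bound[OF a0 a1 assms(3) r2 spos])
    define P1 where "P1 = pochhammer (\<alpha> + 1) r"
    have P1pos: "P1 > 0" unfolding P1_def using a0 by (intro pochhammer_pos) simp
    have Peq: "pochhammer \<alpha> (Suc r) = \<alpha> * P1" unfolding P1_def by (simp add: pochhammer_rec add.commute)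
    have pq: "P1 * Q \<le> (fact r)^2" unfolding P1_def Q_def using poch_prod_le[of \<alpha> r] a0 a1 by simp
    have h1: "pochhammer \<alpha> (Suc r) * pi * (\<rho>^2 + 2) \<le> \<alpha> * P1 * pi * (3/2 * B)"
      unfolding Peq B_def using rho_ineq[OF \<rho>0 \<rho>2] a0 P1pos
      by (intro mult_left_mono) auto
    also have "\<dots> = P1 * B * (4 * (3/8 * (\<alpha> * pi)))" by (simp add: algebra_simps)
    also have "\<dots> \<le> P1 * B * (4 * sin (\<alpha> * pi))"
      using sl P1pos B0 by (intro mult_left_mono) auto
    finally have h2: "pochhammer \<alpha> (Suc r) * pi * (\<rho>^2 + 2) * Q \<le> P1 * B * (4 * sin (\<alpha> * pi)) * Q"
      using Qpos by (intro mult_right_mono) auto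
    also have "\<dots> = (P1 * Q) * (4 * sin (\<alpha> * pi) * B)" by (simp add: algebra_simps)
    also have "\<dots> \<le> (fact r)^2 * (4 * sin (\<alpha> * pi) * B)"
      using pq spos B0 by (intro mult_right_mono) auto
    finally have h3: "pochhammer \<alpha> (Suc r) * pi * (\<rho>^2 + 2) * Q \<le> (fact r)^2 * (4 * sin (\<alpha> * pi) * B)" .
    have "pochhammer \<alpha> (Suc r) * pi * B ^ (r - 2) * (\<rho>^2 + 2) / (fact r * sin (\<alpha> * pi))
        = (pochhammer \<alpha> (Suc r) * pi * (\<rho>^2 + 2) * Q) * (B ^ (r - 2) / (fact r * sin (\<alpha> * pi) * Q))"
      using Qpos spos by (simp add: field_simps)
    also have "\<dots> \<le> ((fact r)^2 * (4 * sin (\<alpha> * pi) * B)) * (B ^ (r - 2) / (fact r * sin (\<alpha> * pi) * Q))"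
      using h3 Qpos spos B0 by (intro mult_right_mono) auto
    also have "\<dots> = 4 * (fact r / Q) * (B ^ (r - 2) * B)"
      using Qpos spos by (simp add: field_simps power2_eq_square)
    also have "B ^ (r - 2) * B = B ^ (r - 1)"
    proof -
      have "r - 1 = Suc (r - 2)" using r2 by simp
      then show ?thesis by (simp only: power_Suc2)
    qed
    finally show ?thesis using cb unfolding goal_form B_def \<rho>_def by linarith
  qed
qed


lemma norm_one_plus_exp_sq:
  "cmod (1 + exp (\<i> * of_real \<psi>)) ^ 2 = 2 + 2 * cos \<psi>"
proof -
  have "exp (\<i> * of_real \<psi>) = Complex (cos \<psi>) (sin \<psi>)"
    by (simp add: exp_eq_polar cis.code)
  then have "cmod (1 + exp (\<i> * of_real \<psi>)) ^ 2 = (1 + cos \<psi>)^2 + (sin \<psi>)^2"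
    by (simp add: cmod_power2)
  also have "\<dots> = 2 + 2 * cos \<psi>"
    using sin_cos_squared_add[of \<psi>] by (simp add: power2_eq_square algebra_simps)
  finally show ?thesis .
qed

lemma gamma_ratio:
  fixes n r :: nat assumes "n \<ge> 2"
  shows "Gamma (1 - 1 / real n) * fact r / Gamma (real r + 1 - 1 / real n) = fact r / pochhammer (1 - 1 / real n) r"
proof -
  have a: "0 < 1 - 1 / real n" using assms by (simp add: field_simps)
  then have ni: "1 - 1 / real n \<notin> \<int>\<^sub>\<le>\<^sub>0" by (auto elim!: nonpos_Ints_cases)
  have "pochhammer (1 - 1 / real n) r = Gamma (1 - 1 / real n + of_nat r) / Gamma (1 - 1 / real n)"
    by (rule pochhammer_Gamma[OF ni])
  moreover have "1 - 1 / real n + of_nat r = real r + 1 - 1 / real n" by simp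
  moreover have "Gamma (1 - 1 / real n) > 0" using a by (rule Gamma_real_pos)
  moreover have "Gamma (real r + 1 - 1 / real n) > 0" using a by (intro Gamma_real_pos) simp
  moreover have "pochhammer (1 - 1 / real n) r > 0" using a by (intro pochhammer_pos)
  ultimately show ?thesis by (simp add: field_simps)
qed

theorem lemma2p6:
  fixes n r :: nat and u z :: complex and \<phi> :: real
  assumes "n \<ge> 2" and "r \<ge> 1"
    and "z / u = exp (\<i> * of_real \<phi>)" and "0 < \<phi>" and "\<phi> < pi"
  shows "cmod (Xnr_star n r z u) \<le> 4 * cmod u ^ r * (Gamma (1 - 1 / real n) * fact r / Gamma (real r + 1 - 1 / real n)) * cmod (1 + exp (\<i> * of_real (\<phi> / 2))) ^ (2 * r - 2)
       \<and> cmod (Xnr_star n r u z) \<le> 4 * cmod z ^ r * (Gamma (1 - 1 / real n) * fact r / Gamma (real r + 1 - 1 / real n)) * cmod (1 + exp (\<i> * of_real (\<phi> / 2))) ^ (2 * r - 2)"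
proof -
  define w where "w = z / u"
  define C where "C = fact r / pochhammer (1 - 1 / real n) r"
  have u0: "u \<noteq> 0" using assms(3) by auto
  have w1: "cmod w = 1" unfolding w_def assms(3) by simp
  have z0: "z \<noteq> 0" using w1 u0 unfolding w_def by auto
  have zu: "cmod z = cmod u"
  proof -
    have "z = w * u" unfolding w_def using u0 by simp
    then show ?thesis using w1 by (simp add: norm_mult)
  qed
  have cpos: "cos (\<phi> / 2) > 0" using assms(4,5) by (intro cos_gt_zero) auto
  have rho: "cmod (1 + w) = 2 * cos (\<phi> / 2)"
  proof -
    have "cmod (1 + w) ^ 2 = 2 + 2 * cos \<phi>" unfolding w_def assms(3) by (rule norm_one_plus_exp_sq)
    also have "\<dots> = (2 * cos (\<phi> / 2)) ^ 2"
      using cos_double_cos[of "\<phi> / 2"] by (simp add: power2_eq_square algebra_simps)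
    finally have eq: "cmod (1 + w) ^ 2 = (2 * cos (\<phi> / 2)) ^ 2" .
    have nn: "0 \<le> 2 * cos (\<phi> / 2)" using cpos by simp
    from power2_eq_iff_nonneg[OF norm_ge_zero nn] eq show ?thesis by blast
  qed
  have pw: "cmod (1 + exp (\<i> * of_real (\<phi> / 2))) ^ (2 * r - 2) = (cmod (1 + w) + 2) ^ (r - 1)"
  proof -
    have "2 * r - 2 = 2 * (r - 1)" by simp
    then have "cmod (1 + exp (\<i> * of_real (\<phi> / 2))) ^ (2 * r - 2) = (cmod (1 + exp (\<i> * of_real (\<phi> / 2))) ^ 2) ^ (r - 1)"
      by (simp add: power_mult)
    also have "\<dots> = (cmod (1 + w) + 2) ^ (r - 1)"
      unfolding norm_one_plus_exp_sq rho by (simp add: add.commute)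
    finally show ?thesis .
  qed
  have gr: "Gamma (1 - 1 / real n) * fact r / Gamma (real r + 1 - 1 / real n) = C"
    unfolding C_def by (rule gamma_ratio[OF assms(1)])
  have mb: "cmod (Xnr n r v) \<le> 4 * C * (cmod (1 + v) + 2) ^ (r - 1)" if "cmod v = 1" for v
    using main_bound[OF assms(1,2) that] unfolding C_def .
  have Cnn: "0 \<le> 4 * C * (cmod (1 + w) + 2) ^ (r - 1)"
    using mb[OF w1] norm_ge_zero order_trans by blast
  have first: "cmod (Xnr_star n r z u) \<le> 4 * cmod u ^ r * C * (cmod (1 + w) + 2) ^ (r - 1)"
  proof -
    have "cmod (Xnr_star n r z u) = cmod u ^ r * cmod (Xnr n r w)"
      unfolding Xnr_star_def w_def by (simp add: norm_mult norm_power)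
    also have "\<dots> \<le> cmod u ^ r * (4 * C * (cmod (1 + w) + 2) ^ (r - 1))"
      by (intro mult_left_mono mb w1) simp
    finally show ?thesis by (simp add: algebra_simps)
  qed
  have second: "cmod (Xnr_star n r u z) \<le> 4 * cmod z ^ r * C * (cmod (1 + w) + 2) ^ (r - 1)"
  proof -
    have v1: "cmod (u / z) = 1" using zu z0 u0 by (simp add: norm_divide)
    have v2: "cmod (1 + u / z) = cmod (1 + w)"
    proof -
      have "1 + u / z = (1 + w) * (u / z)" unfolding w_def using u0 z0 by (simp add: field_simps)
      then show ?thesis using v1 by (simp only: norm_mult)
    qed
    have "cmod (Xnr_star n r u z) = cmod z ^ r * cmod (Xnr n r (u / z))"
      unfolding Xnr_star_def by (simp add: norm_mult norm_power)
    also have "\<dots> \<le> cmod z ^ r * (4 * C * (cmod (1 + w) + 2) ^ (r - 1))"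
      using mb[OF v1] unfolding v2 by (intro mult_left_mono) simp_all
    finally show ?thesis by (simp add: algebra_simps)
  qed
  show ?thesis unfolding gr pw using first second by simp
qed

end
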